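(* Let $d\ge2$ and let $\mathcal{F}\subseteq\binom{\mathbb{N}}{d}$ be a finite family which is both left-compressed and right-compressed. Then $\mathcal{F}$ is shifted.
   Context: $\mathbb{N}=\{1,2,3,\dots\}$, $\mathbb{N}_{>k}=\{k+1,k+2,\dots\}$. $\binom{S}{d}$ is the set of $d$-element subsets of $S$; elements are written $\mathbf{u}=(u_1,\ldots,u_d)$ with $u_1<\cdots<u_d$. The squashed order: $\mathbf{u}<\mathbf{v}$ iff the largest element of the symmetric difference of $\mathbf{u},\mathbf{v}$ belongs to $\mathbf{v}$. A finite family in $\binom{\mathbb{N}}{e}$ (resp. $\binom{\mathbb{N}_{>k}}{e}$) is compressed in it if it consists of the smallest elements of $\binom{\mathbb{N}}{e}$ (resp. $\binom{\mathbb{N}_{>k}}{e}$) in the squashed order. For $\mathcal{F}\subseteq\binom{\mathbb{N}}{d}$ and $k\ge1$: $\widehat{\mathcal{F}}_{1,k}=\{\widehat{\mathbf{u}}\in\binom{\mathbb{N}}{d-1}\mid \{k\}\cup\widehat{\mathbf{u}}\in\mathcal{F},\ \min\widehat{\mathbf{u}}>k\}\subseteq\binom{\mathbb{N}_{>k}}{d-1}$ and $\widehat{\mathcal{F}}_{d,k}=\{\widehat{\mathbf{u}}\in\binom{\mathbb{N}}{d-1}\mid \widehat{\mathbf{u}}\cup\{k\}\in\mathcal{F},\ \max\widehat{\mathbf{u}}<k\}$. $\mathcal{F}$ is left-compressed if $\widehat{\mathcal{F}}_{1,k}$ is compressed in $\binom{\mathbb{N}_{>k}}{d-1}$ for every $k\ge1$,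 and right-compressed if $\widehat{\mathcal{F}}_{d,k}$ is compressed in $\binom{\mathbb{N}}{d-1}$ for every $k\ge1$. The Borel order: $\mathbf{v}\le_B\mathbf{u}$ iff $v_i\le u_i$ for all $i$; $\mathcal{F}$ is shifted if $\mathbf{v}\in\mathcal{F}$ whenever $\mathbf{v}\le_B\mathbf{u}$ for some $\mathbf{u}\in\mathcal{F}$. *)

theory Defs
  imports Main
begin

definition Npos :: "nat set" where "Npos = {n. n \<ge> 1}"
definition Ngt :: "nat \<Rightarrow> nat set" where "Ngt k = {n. n > k}"

definition binom :: "nat set \<Rightarrow> nat \<Rightarrow> nat set set" where
  "binom S d = {u. u \<subseteq> S \<and> finite u \<and> card u = d}"

definition squashed_less :: "nat set \<Rightarrow> nat set \<Rightarrow> bool" where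
  "squashed_less u v \<longleftrightarrow> u \<noteq> v \<and> Max ((u - v) \<union> (v - u)) \<in> v"

definition compressed_in :: "nat set set \<Rightarrow> nat set \<Rightarrow> nat \<Rightarrow> bool" where
  "compressed_in G S e \<longleftrightarrow> finite G \<and> G \<subseteq> binom S e \<and>
     (\<forall>u\<in>G. \<forall>v\<in>binom S e. squashed_less v u \<longrightarrow> v \<in> G)"

definition left_link :: "nat set set \<Rightarrow> nat \<Rightarrow> nat set set" where
  "left_link F k = {w. insert k w \<in> F \<and> (\<forall>x\<in>w. k < x)}"

definition right_link :: "nat set set \<Rightarrow> nat \<Rightarrow> nat set set" where
  "right_link F k = {w. w \<union> {k} \<in> F \<and> (\<forall>x\<in>w. x < k)}"

definition left_compressed :: "nat set set \<Rightarrow> nat \<Rightarrow> bool" where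
  "left_compressed F d \<longleftrightarrow> (\<forall>k\<ge>1. compressed_in (left_link F k) (Ngt k) (d - 1))"

definition right_compressed :: "nat set set \<Rightarrow> nat \<Rightarrow> bool" where
  "right_compressed F d \<longleftrightarrow> (\<forall>k\<ge>1. compressed_in (right_link F k) Npos (d - 1))"

definition borel_le :: "nat set \<Rightarrow> nat set \<Rightarrow> bool" where
  "borel_le v u \<longleftrightarrow> card v = card u \<and>
     (\<forall>i < card u. sorted_list_of_set v ! i \<le> sorted_list_of_set u ! i)"

definition shifted :: "nat set set \<Rightarrow> nat \<Rightarrow> bool" where
  "shifted F d \<longleftrightarrow> (\<forall>u\<in>F. \<forall>v\<in>binom Npos d. borel_le v u \<longrightarrow> v \<in> F)"

end

theory Submission
  imports Defs
begin

lemma swap_facts: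
  assumes "finite w" "x \<in> w" "x - 1 \<notin> w" "(2::nat) \<le> x"
  shows "card (insert (x-1) (w - {x})) = card w"
    and "squashed_less (insert (x-1) (w - {x})) w"
proof -
  have "x - 1 \<notin> w - {x}" using assms by auto
  then have "card (insert (x-1) (w - {x})) = Suc (card (w - {x}))"
    using assms by simp
  also have "\<dots> = card w" using assms
    by (metis card_Diff1_less card_Suc_Diff1)
  finally show "card (insert (x-1) (w - {x})) = card w" .
  have e: "(insert (x-1) (w - {x}) - w) \<union> (w - insert (x-1) (w - {x})) = {x-1, x}"
    using assms by auto
  have "Max {x-1, x} = x" using assms by (simp add: max_def)
  then show "squashed_less (insert (x-1) (w - {x})) w"
    unfolding squashed_less_def e using assms by auto
qed

lemma move:
  assumes d: "d \<ge> 2" and FB: "F \<subseteq> binom Npos d"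
    and L: "left_compressed F d" and R: "right_compressed F d"
    and u: "u \<in> F" and x: "x \<in> u" "2 \<le> x" "x - 1 \<notin> u"
  shows "insert (x-1) (u - {x}) \<in> F"
proof -
  have fu: "finite u" "card u = d" "u \<subseteq> Npos" using FB u by (auto simp: binom_def)
  have ne: "u \<noteq> {}" using x by auto
  show ?thesis
  proof (cases "x = Min u")
    case False
    define k where "k = Min u"
    have ku: "k \<in> u" using fu ne by (simp add: k_def)
    have kle: "\<And>y. y \<in> u \<Longrightarrow> k \<le> y" using fu k_def by simp
    have kx: "k < x" using False kle[OF x(1)] k_def by auto
    have kx1: "k < x - 1" using kx ku x(3) by (cases "k = x-1") auto
    have k1: "k \<ge> 1" using ku fu(3) by (auto simp: Npos_def)
    define w where "w = u - {k}"
    have wl: "w \<in> left_link F k" unfolding left_link_def w_def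
      using ku u kle by (auto simp: insert_absorb) (metis le_neq_implies_less)
    have C: "compressed_in (left_link F k) (Ngt k) (d-1)" using L k1 by (simp add: left_compressed_def)
    define v where "v = insert (x-1) (w - {x})"
    have fw: "finite w" "x \<in> w" "x - 1 \<notin> w" using fu x kx by (auto simp: w_def)
    have cw: "card w = d - 1" using fu ku by (simp add: w_def)
    have wgt: "\<forall>y\<in>w. k < y" using wl by (simp add: left_link_def)
    have vb: "v \<in> binom (Ngt k) (d-1)"
      unfolding binom_def v_def using swap_facts(1)[OF fw x(2)] cw fw wgt kx1
      by (auto simp: Ngt_def)
    have "squashed_less v w" unfolding v_def using swap_facts(2)[OF fw x(2)] .
    then have "v \<in> left_link F k" using C wl vb by (auto simp: compressed_in_def)
    then have "insert k v \<in> F" by (simp add: left_link_def)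
    moreover have "insert k v = insert (x-1) (u - {x})"
      using ku kx by (auto simp: v_def w_def)
    ultimately show ?thesis by simp
  next
    case True
    define k where "k = Max u"
    have ku: "k \<in> u" using fu ne by (simp add: k_def)
    have kle: "\<And>y. y \<in> u \<Longrightarrow> y \<le> k" using fu k_def by simp
    have xle: "\<And>y. y \<in> u \<Longrightarrow> x \<le> y" using fu True by simp
    have kx: "x < k"
    proof (rule ccontr)
      assume "\<not> x < k"
      then have "u \<subseteq> {x}" using kle xle by fastforce
      then have "card u \<le> card {x}" by (intro card_mono) auto
      then have "card u \<le> 1" by simp
      then show False using fu d by simp
    qed
    have k1: "k \<ge> 1" using ku fu(3) by (auto simp: Npos_def)
    define w where "w = u - {k}"
    have wl: "w \<in> right_link F k" unfolding right_link_def w_def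
      using ku u kle by (auto simp: insert_absorb) (metis le_neq_implies_less)
    have C: "compressed_in (right_link F k) Npos (d-1)" using R k1 by (simp add: right_compressed_def)
    define v where "v = insert (x-1) (w - {x})"
    have fw: "finite w" "x \<in> w" "x - 1 \<notin> w" using fu x kx by (auto simp: w_def)
    have cw: "card w = d - 1" using fu ku by (simp add: w_def)
    have wN: "w \<subseteq> Npos" using fu by (auto simp: w_def)
    have vb: "v \<in> binom Npos (d-1)"
      unfolding binom_def v_def using swap_facts(1)[OF fw x(2)] cw fw wN x(2)
      by (auto simp: Npos_def)
    have "squashed_less v w" unfolding v_def using swap_facts(2)[OF fw x(2)] .
    then have "v \<in> right_link F k" using C wl vb by (auto simp: compressed_in_def)
    then have "v \<union> {k} \<in> F" by (simp add: right_link_def)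
    moreover have "v \<union> {k} = insert (x-1) (u - {x})"
      using ku kx by (auto simp: v_def w_def)
    ultimately show ?thesis by simp
  qed
qed


lemma ss_strict: "sorted_wrt (<) (sorted_list_of_set (A::nat set))"
  using sorted_list_of_set.strict_sorted_key_list_of_set[of A] by simp

lemma ss_less: "j < l \<Longrightarrow> l < length (sorted_list_of_set (A::nat set)) \<Longrightarrow>
   sorted_list_of_set A ! j < sorted_list_of_set A ! l"
  using ss_strict[of A] by (auto simp: sorted_wrt_iff_nth_less)

lemma step:
  assumes fin: "finite u" "finite v" and vN: "v \<subseteq> Npos"
    and b: "borel_le v u" and ne: "v \<noteq> u"
  obtains x where "x \<in> u" "2 \<le> x" "x - 1 \<notin> u" "borel_le v (insert (x-1) (u - {x}))"
proof -
  define U where "U = sorted_list_of_set u"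
  define V where "V = sorted_list_of_set v"
  define n where "n = card u"
  have lU: "length U = n" by (simp add: U_def n_def)
  have lV: "length V = n" using b by (simp add: V_def n_def borel_le_def)
  have sU: "set U = u" using fin by (simp add: U_def)
  have sV: "set V = v" using fin by (simp add: V_def)
  have le: "\<And>j. j < n \<Longrightarrow> V!j \<le> U!j" using b by (simp add: borel_le_def U_def V_def n_def)
  have ex: "\<exists>i. i < n \<and> V!i < U!i"
  proof (rule ccontr)
    assume "\<not> ?thesis"
    then have "\<And>j. j < n \<Longrightarrow> V!j = U!j" using le by (meson le_neq_implies_less)
    then have "V = U" using lU lV by (intro nth_equalityI) auto
    then show False using sU sV ne by simp
  qed
  define i where "i = (LEAST i. i < n \<and> V!i < U!i)"
  have i: "i < n" "V!i < U!i" using LeastI_ex[OF ex] by (auto simp: i_def)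
  have below: "\<And>j. j < i \<Longrightarrow> V!j = U!j"
  proof -
    fix j assume "j < i"
    then have "\<not> (j < n \<and> V!j < U!j)" unfolding i_def by (rule not_less_Least)
    then show "V!j = U!j" using le[of j] \<open>j < i\<close> i(1) by simp
  qed
  define x where "x = U!i"
  have xu: "x \<in> u" using i sU lU by (auto simp: x_def)
  have "V!i \<in> v" using i lV sV by (metis nth_mem)
  then have "V!i \<ge> 1" using vN by (auto simp: Npos_def)
  then have x2: "2 \<le> x" using i by (simp add: x_def)
  have blt: "\<And>j. j < i \<Longrightarrow> U!j < x - 1"
  proof -
    fix j assume "j < i"
    then have "V!j < V!i" using i lV unfolding V_def by (intro ss_less) auto
    then show "U!j < x - 1" using below[OF \<open>j < i\<close>] i x_def by simp
  qed
  have Ult: "\<And>j l. j < l \<Longrightarrow> l < n \<Longrightarrow> U!j < U!l" using lU unfolding U_def by (intro ss_less) auto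
  have xn: "x - 1 \<notin> u"
  proof
    assume "x - 1 \<in> u"
    then obtain j where j: "j < n" "U!j = x - 1" using sU lU by (metis in_set_conv_nth)
    show False
    proof (cases "j < i")
      case True then show False using blt j by fastforce
    next
      case False
      then have "i \<le> j" by simp
      have "x \<le> U!j"
      proof (cases "i = j")
        case True then show ?thesis by (simp add: x_def)
      next
        case False then have "U!i < U!j" using Ult[of i j] \<open>i \<le> j\<close> j(1) by simp
        then show ?thesis by (simp add: x_def)
      qed
      then show False using j x2 by simp
    qed
  qed
  define U' where "U' = U[i := x - 1]"
  have lU': "length U' = n" using lU by (simp add: U'_def)
  have U'nth: "\<And>j. j < n \<Longrightarrow> U'!j = (if j = i then x - 1 else U!j)"
    using lU by (simp add: U'_def nth_list_update)
  have sw: "sorted_wrt (<) U'"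
    unfolding sorted_wrt_iff_nth_less lU'
  proof (intro allI impI)
    fix j l assume jl: "j < l" "l < n"
    show "U'!j < U'!l"
    proof (cases "l = i")
      case True then show ?thesis using jl U'nth blt by auto
    next
      case False
      note lF = False
      show ?thesis
      proof (cases "j = i")
        case True
        then have "x < U!l" using Ult[of j l] jl x_def by simp
        then show ?thesis using True jl U'nth lF x2 by auto
      next
        case False then show ?thesis using jl U'nth[of j] U'nth[of l] lF Ult[of j l] by simp
      qed
    qed
  qed
  have dU: "distinct U" by (simp add: U_def)
  have setU': "set U' = insert (x-1) (u - {x})"
    using set_update_distinct[OF dU, of i "x-1"] i lU sU by (simp add: U'_def x_def)
  have dU': "distinct U'" using sw by (simp add: strict_sorted_iff)
  have cU': "card (set U') = n" using dU' lU' by (simp add: distinct_card)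
  have sl: "sorted_list_of_set (set U') = U'"
    using sorted_list_of_set_unique[of "set U'" U'] sw cU' lU' by simp
  have "borel_le v (insert (x-1) (u - {x}))"
    unfolding borel_le_def setU'[symmetric] sl cU'
  proof (intro conjI allI impI)
    show "card v = n" using b by (simp add: borel_le_def n_def)
    fix j assume "j < n"
    then show "sorted_list_of_set v ! j \<le> U' ! j"
      using U'nth le i x_def by (fold V_def) auto
  qed
  then show ?thesis using that xu x2 xn by blast
qed


theorem lemma3p9:
  fixes F :: "nat set set" and d :: nat
  assumes "d \<ge> 2"
    and "F \<subseteq> binom Npos d"
    and "finite F"
    and "left_compressed F d"
    and "right_compressed F d"
  shows "shifted F d"
proof -
  have main: "\<forall>u. \<Sum>u = s \<longrightarrow> u \<in> F \<longrightarrow> (\<forall>v\<in>binom Npos d. borel_le v u \<longrightarrow> v \<in> F)" for s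
  proof (induction s rule: less_induct)
    case (less s)
    show ?case
    proof (intro allI impI ballI)
      fix u v assume us: "\<Sum>u = s" and uF: "u \<in> F" and vB: "v \<in> binom Npos d" and b: "borel_le v u"
      show "v \<in> F"
      proof (cases "v = u")
        case True then show ?thesis using uF by simp
      next
        case False
        have fu: "finite u" using uF assms(2) by (auto simp: binom_def)
        have fv: "finite v" "v \<subseteq> Npos" using vB by (auto simp: binom_def)
        obtain x where x: "x \<in> u" "2 \<le> x" "x - 1 \<notin> u" "borel_le v (insert (x-1) (u - {x}))"
          using step[OF fu fv b False] by blast
        have u'F: "insert (x-1) (u - {x}) \<in> F"
          using move[OF assms(1,2,4,5) uF x(1-3)] .
        have "\<Sum>(insert (x-1) (u - {x})) = (x - 1) + \<Sum>(u - {x})"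
          using fu x(3) by (subst sum.insert) auto
        moreover have "\<Sum>u = x + \<Sum>(u - {x})" using fu x(1) by (simp add: sum.remove)
        ultimately have "\<Sum>(insert (x-1) (u - {x})) < s" using us x(2) by simp
        then show ?thesis using less.IH u'F vB x(4) by blast
      qed
    qed
  qed
  show ?thesis unfolding shifted_def using main by blast
qed

end
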